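(* Let $(M,I,J,K)$ be a hypercomplex manifold of quaternionic dimension $n$, let $\Omega_1$ be a strictly positive $(2,0)$-form (w.r.t. $I$), i.e. $\Omega_1(z,\bar zJ)>0$ for every nonzero $(1,0)$-vector $z$, and let $\Omega_2$ be a q-real $(2,0)$-form on $M$. Then for each $x\in M$ there exists a basis $e_1,\bar e_1J,\dots,e_n,\bar e_nJ$ of $T^{1,0}_xM$ such that for all $i\ne j$ $$\Omega_1(e_i,e_j)=\Omega_2(e_i,e_j)=\Omega_1(e_i,\bar e_jJ)=\Omega_2(e_i,\bar e_jJ)=0.$$
   Context: A hypercomplex manifold $(M,I,J,K)$ carries three integrable complex structures with $I\circ J\circ K=-\mathrm{id}_{TM}$; endomorphisms act on tangent vectors from the right (written $v\mapsto vJ$, extended complex-linearly); types $(p,q)$ and $T^{1,0}M$ refer to $I$, and $J$ maps $T^{0,1}_xM$ to $T^{1,0}_xM$. An endomorphism $L$ acts on forms by $(L\alpha)(X_1,\dots,X_k)=\alpha(X_1L,\dots,X_kL)$. A $(2,0)$-form $\alpha$ is q-real if $J\alpha=\bar\alpha$. *)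

theory Defs
  imports "HOL-Analysis.Analysis"
begin

text \<open>Pointwise linear-algebra model of a hypercomplex manifold at a point x.
  The real tangent space T_xM is a finite-dimensional real vector space 'v,
  I, J, K are real-linear endomorphisms acting from the right (v I is written I v,
  so v I J K is K (J (I v))).  The complexification T_xM (x) C is modelled as
  pairs (x, y) standing for x + i y.\<close>

definition cscale :: "complex \<Rightarrow> ('v::real_vector \<times> 'v) \<Rightarrow> 'v \<times> 'v" where
  "cscale c w = (Re c *\<^sub>R fst w - Im c *\<^sub>R snd w, Im c *\<^sub>R fst w + Re c *\<^sub>R snd w)"

definition cext :: "('v \<Rightarrow> 'v) \<Rightarrow> ('v \<times> 'v) \<Rightarrow> 'v \<times> 'v" where
  "cext f w = (f (fst w), f (snd w))"

definition cconj :: "('v::real_vector \<times> 'v) \<Rightarrow> 'v \<times> 'v" where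
  "cconj w = (fst w, - snd w)"

definition cform :: "('v \<Rightarrow> 'v \<Rightarrow> complex) \<Rightarrow> ('v \<times> 'v) \<Rightarrow> ('v \<times> 'v) \<Rightarrow> complex" where
  "cform \<alpha> u w = \<alpha> (fst u) (fst w) + \<i> * \<alpha> (fst u) (snd w) + \<i> * \<alpha> (snd u) (fst w)
                 - \<alpha> (snd u) (snd w)"

definition T10 :: "('v::real_vector \<Rightarrow> 'v) \<Rightarrow> ('v \<times> 'v) set" where
  "T10 I = {w. cext I w = cscale \<i> w}"

definition T01 :: "('v::real_vector \<Rightarrow> 'v) \<Rightarrow> ('v \<times> 'v) set" where
  "T01 I = {w. cext I w = cscale (- \<i>) w}"

definition hypercomplex :: "('v::real_vector \<Rightarrow> 'v) \<Rightarrow> ('v \<Rightarrow> 'v) \<Rightarrow> ('v \<Rightarrow> 'v) \<Rightarrow> bool" where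
  "hypercomplex I J K \<longleftrightarrow> linear I \<and> linear J \<and> linear K \<and>
     (\<forall>v. I (I v) = - v) \<and> (\<forall>v. J (J v) = - v) \<and> (\<forall>v. K (K v) = - v) \<and>
     (\<forall>v. K (J (I v)) = - v)"

definition two_form :: "('v::real_vector \<Rightarrow> 'v \<Rightarrow> complex) \<Rightarrow> bool" where
  "two_form \<alpha> \<longleftrightarrow> bilinear \<alpha> \<and> (\<forall>x y. \<alpha> x y = - \<alpha> y x)"

definition form20 :: "('v::real_vector \<Rightarrow> 'v) \<Rightarrow> ('v \<Rightarrow> 'v \<Rightarrow> complex) \<Rightarrow> bool" where
  "form20 I \<alpha> \<longleftrightarrow> two_form \<alpha> \<and>
     (\<forall>u w. u \<in> T01 I \<longrightarrow> cform \<alpha> u w = 0 \<and> cform \<alpha> w u = 0)"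

text \<open>q-real: J alpha = conj alpha, i.e. alpha(XJ, YJ) = conj(alpha(X,Y)) for real X, Y\<close>
definition q_real :: "('v \<Rightarrow> 'v) \<Rightarrow> ('v \<Rightarrow> 'v \<Rightarrow> complex) \<Rightarrow> bool" where
  "q_real J \<alpha> \<longleftrightarrow> (\<forall>x y. \<alpha> (J x) (J y) = cnj (\<alpha> x y))"

definition strictly_positive ::
  "('v::real_vector \<Rightarrow> 'v) \<Rightarrow> ('v \<Rightarrow> 'v) \<Rightarrow> ('v \<Rightarrow> 'v \<Rightarrow> complex) \<Rightarrow> bool" where
  "strictly_positive I J \<Omega> \<longleftrightarrow>
     (\<forall>z \<in> T10 I. z \<noteq> 0 \<longrightarrow>
        Im (cform \<Omega> z (cext J (cconj z))) = 0 \<and> Re (cform \<Omega> z (cext J (cconj z))) > 0)"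

end

theory Submission
  imports Defs "HOL-Analysis.Analysis"
begin
definition F20 :: "('v::real_vector \<Rightarrow> 'v) \<Rightarrow> ('v \<Rightarrow> 'v \<Rightarrow> complex) \<Rightarrow> bool" where
  "F20 I \<alpha> \<longleftrightarrow> bilinear \<alpha> \<and> (\<forall>x y. \<alpha> x y = - \<alpha> y x) \<and> (\<forall>x y. \<alpha> (I x) y = \<i> * \<alpha> x y)"

locale hq =
  fixes I J :: "'v::euclidean_space \<Rightarrow> 'v"
  assumes linI: "linear I" and linJ: "linear J"
    and II[simp]: "\<And>v. I (I v) = - v" and JJ[simp]: "\<And>v. J (J v) = - v"
    and JI: "\<And>v. J (I v) = - I (J v)"
begin

lemma I_simps[simp]: "I (a + b) = I a + I b" "I (- a) = - I a" "I (c *\<^sub>R a) = c *\<^sub>R I a"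
   "I 0 = 0" "I (a - b) = I a - I b"
  using linI by (auto simp: linear_add linear_neg linear_scale linear_0 linear_diff)
lemma J_simps[simp]: "J (a + b) = J a + J b" "J (- a) = - J a" "J (c *\<^sub>R a) = c *\<^sub>R J a"
   "J 0 = 0" "J (a - b) = J a - J b"
  using linJ by (auto simp: linear_add linear_neg linear_scale linear_0 linear_diff)

lemma J_eq0[simp]: "J a = 0 \<longleftrightarrow> a = 0"
  by (metis JJ J_simps(4) neg_0_equal_iff_equal)
lemma I_eq0[simp]: "I a = 0 \<longleftrightarrow> a = 0"
  by (metis II I_simps(4) neg_0_equal_iff_equal)

context fixes \<alpha> assumes F: "F20 I \<alpha>" begin

lemma bil: "bilinear \<alpha>" using F unfolding F20_def by blast
lemma anti: "\<alpha> x y = - \<alpha> y x" using F unfolding F20_def by blast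
lemma Il[simp]: "\<alpha> (I x) y = \<i> * \<alpha> x y" using F unfolding F20_def by blast
lemma Ir[simp]: "\<alpha> x (I y) = \<i> * \<alpha> x y"
proof -
  have "\<alpha> x (I y) = - \<alpha> (I y) x" by (rule anti)
  also have "\<dots> = \<i> * \<alpha> x y" using anti[of y x] by simp
  finally show ?thesis .
qed
lemma lin_simps[simp]: "\<alpha> (a + b) y = \<alpha> a y + \<alpha> b y" "\<alpha> x (a + b) = \<alpha> x a + \<alpha> x b"
  "\<alpha> (- a) y = - \<alpha> a y" "\<alpha> x (- b) = - \<alpha> x b"
  "\<alpha> (a - b) y = \<alpha> a y - \<alpha> b y" "\<alpha> x (a - b) = \<alpha> x a - \<alpha> x b"
  "\<alpha> (c *\<^sub>R a) y = c *\<^sub>R \<alpha> a y" "\<alpha> x (c *\<^sub>R b) = c *\<^sub>R \<alpha> x b"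
  "\<alpha> 0 y = 0" "\<alpha> x 0 = 0"
  using bil by (auto simp: bilinear_ladd bilinear_radd bilinear_lneg bilinear_rneg bilinear_lsub
    bilinear_rsub bilinear_lmul bilinear_rmul bilinear_lzero bilinear_rzero)
lemma diag[simp]: "\<alpha> x x = 0" using anti[of x x] by simp

lemma H_Il: "\<alpha> (I a) (J b) = \<i> * \<alpha> a (J b)" by simp
lemma H_Ir: "\<alpha> a (J (I b)) = - \<i> * \<alpha> a (J b)" by (simp add: JI)

context assumes Q: "\<And>x y. \<alpha> (J x) (J y) = cnj (\<alpha> x y)" begin
lemma herm: "\<alpha> b (J a) = cnj (\<alpha> a (J b))"
proof -
  have "\<alpha> (J a) b = \<alpha> (J a) (J (- J b))" by simp
  also have "\<dots> = - cnj (\<alpha> a (J b))" by (simp only: Q lin_simps) simp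
  finally show ?thesis by (metis anti minus_minus)
qed
lemma Hreal: "Im (\<alpha> a (J a)) = 0" using herm[of a a] by (metis Reals_cnj_iff complex_is_Real_iff)
end
end

lemma qreal_of_pos:
  assumes F: "F20 I \<alpha>" and R: "\<And>x. Im (\<alpha> x (J x)) = 0"
  shows "\<alpha> (J x) (J y) = cnj (\<alpha> x y)"
proof -
  note L = lin_simps[OF F] Il[OF F] Ir[OF F]
  have h: "\<alpha> b (J a) = cnj (\<alpha> a (J b))" for a b
  proof -
    have e1: "\<alpha> (a+b) (J (a+b)) = \<alpha> a (J a) + \<alpha> b (J b) + (\<alpha> a (J b) + \<alpha> b (J a))"
      using L by (simp add: algebra_simps)
    have e2: "\<alpha> (a + I b) (J (a + I b)) = \<alpha> a (J a) + \<alpha> (I b) (J (I b)) + (\<alpha> a (J (I b)) + \<i> * \<alpha> b (J a))"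
      using L by (simp add: algebra_simps)
    have r1: "Im (\<alpha> a (J b) + \<alpha> b (J a)) = 0"
      using R[of "a+b"] R[of a] R[of b] unfolding e1 by simp
    have r2: "Im (\<alpha> a (J (I b)) + \<i> * \<alpha> b (J a)) = 0"
      using R[of "a+I b"] R[of a] R[of "I b"] unfolding e2 by simp
    have e3: "\<alpha> a (J (I b)) = - \<i> * \<alpha> a (J b)"
      using L JI by simp
    have r3: "Re (\<alpha> a (J b) - \<alpha> b (J a)) = 0" using r2 unfolding e3 by simp
    show ?thesis using r1 r3 by (simp add: complex_eq_iff)
  qed
  have "\<alpha> (J x) (J y) = cnj (\<alpha> y (J (J x)))" by (rule h)
  also have "\<dots> = cnj (\<alpha> x y)" using anti[OF F, of y x] L by simp
  finally show ?thesis .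
qed

end

locale hq2 = hq I J for I J :: "'v::euclidean_space \<Rightarrow> 'v" +
  fixes \<Omega>1 \<Omega>2 :: "'v \<Rightarrow> 'v \<Rightarrow> complex"
  assumes F1: "F20 I \<Omega>1" and F2: "F20 I \<Omega>2"
    and R1: "\<And>x. Im (\<Omega>1 x (J x)) = 0"
    and pos: "\<And>x. x \<noteq> 0 \<Longrightarrow> Re (\<Omega>1 x (J x)) > 0"
    and Q2: "\<And>x y. \<Omega>2 (J x) (J y) = cnj (\<Omega>2 x y)"
begin

lemma Q1: "\<Omega>1 (J x) (J y) = cnj (\<Omega>1 x y)" by (rule qreal_of_pos[OF F1 R1])

lemmas L1 = lin_simps[OF F1] Il[OF F1] Ir[OF F1] diag[OF F1]
lemmas L2 = lin_simps[OF F2] Il[OF F2] Ir[OF F2] diag[OF F2]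

definition H1 where "H1 a b = \<Omega>1 a (J b)"
definition H2 where "H2 a b = \<Omega>2 a (J b)"
definition perp where "perp a w \<longleftrightarrow> H1 a w = 0 \<and> H1 (J a) w = 0"
definition qop :: "nat \<Rightarrow> 'v \<Rightarrow> 'v" where
  "qop m a = (if m = 0 then a else if m = 1 then I a else if m = 2 then J a else I (J a))"
definition p where "p a b = Re (H1 a b)"

lemma herm1: "H1 b a = cnj (H1 a b)" unfolding H1_def by (rule herm[where \<alpha>=\<Omega>1, OF F1 Q1])
lemma herm2: "H2 b a = cnj (H2 a b)" unfolding H2_def by (rule herm[where \<alpha>=\<Omega>2, OF F2 Q2])

lemma H1_simps[simp]: "H1 (I a) b = \<i> * H1 a b" "H1 a (I b) = - \<i> * H1 a b"
    "H1 (a + a') b = H1 a b + H1 a' b" "H1 a (b + b') = H1 a b + H1 a b'"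
  "H1 (c *\<^sub>R a) b = c *\<^sub>R H1 a b" "H1 a (c *\<^sub>R b) = c *\<^sub>R H1 a b"
  "H1 (- a) b = - H1 a b" "H1 a (- b) = - H1 a b" "H1 0 b = 0" "H1 a 0 = 0"
  "H1 (a - a') b = H1 a b - H1 a' b" "H1 a (b - b') = H1 a b - H1 a b'"
  unfolding H1_def using L1 JI Q1 by simp_all

lemma H2_simps[simp]: "H2 (I a) b = \<i> * H2 a b" "H2 a (I b) = - \<i> * H2 a b"
    "H2 (a + a') b = H2 a b + H2 a' b" "H2 a (b + b') = H2 a b + H2 a b'"
  "H2 (c *\<^sub>R a) b = c *\<^sub>R H2 a b" "H2 a (c *\<^sub>R b) = c *\<^sub>R H2 a b"
  "H2 (- a) b = - H2 a b" "H2 a (- b) = - H2 a b" "H2 0 b = 0" "H2 a 0 = 0"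
  "H2 (a - a') b = H2 a b - H2 a' b" "H2 a (b - b') = H2 a b - H2 a b'"
  unfolding H2_def using L2 JI Q2 by simp_all

lemma H1_Jr: "H1 a (J b) = - \<Omega>1 a b" unfolding H1_def using L1 by simp
lemma H1_Jl: "H1 (J a) b = cnj (\<Omega>1 a b)" unfolding H1_def using Q1 by simp
lemma H2_Jr: "H2 a (J b) = - \<Omega>2 a b" unfolding H2_def using L2 by simp
lemma H2_Jl: "H2 (J a) b = cnj (\<Omega>2 a b)" unfolding H2_def using Q2 by simp

lemma H1_JJ[simp]: "H1 (J a) (J b) = cnj (H1 a b)"
  using H1_Jr[of "J a" b] herm1[of a b] anti[OF F1, of "J a" b] unfolding H1_def by simp
lemma H2_JJ[simp]: "H2 (J a) (J b) = cnj (H2 a b)"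
  using H2_Jr[of "J a" b] herm2[of a b] anti[OF F2, of "J a" b] unfolding H2_def by simp

lemma H1_real: "Im (H1 a a) = 0" unfolding H1_def by (rule R1)
lemma H1_pos: "a \<noteq> 0 \<Longrightarrow> Re (H1 a a) > 0" unfolding H1_def by (rule pos)
lemma H2_real: "Im (H2 a a) = 0" using herm2[of a a] by (metis Reals_cnj_iff complex_is_Real_iff)

lemma p_sym: "p a b = p b a" unfolding p_def using herm1[of a b] by simp

lemma H1_Ja_a: "H1 (J a) a = 0" "H1 a (J a) = 0" using H1_Jr[of a a] H1_Jl[of a a] L1 by simp_all

lemma perp_alt: "perp a w \<longleftrightarrow> H1 a w = 0 \<and> H1 a (J w) = 0"
proof -
  have "H1 (J a) w = 0 \<longleftrightarrow> \<Omega>1 a w = 0" unfolding H1_Jl by simp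
  moreover have "H1 a (J w) = 0 \<longleftrightarrow> \<Omega>1 a w = 0" unfolding H1_Jr by simp
  ultimately show ?thesis unfolding perp_def by blast
qed

lemma perp_sym: assumes "perp a b" shows "perp b a"
proof -
  have "H1 a b = 0" "H1 a (J b) = 0" using assms perp_alt by blast+
  then have "H1 b a = 0" "H1 (J b) a = 0" using herm1[of a b] herm1[of a "J b"] by simp_all
  then show ?thesis unfolding perp_def by blast
qed

lemma perp_J: "perp a w \<Longrightarrow> perp a (J w)"
  unfolding perp_alt by simp
lemma perp_I: "perp a w \<Longrightarrow> perp a (I w)"
  unfolding perp_def by simp
lemma perp_add: "perp a u \<Longrightarrow> perp a v \<Longrightarrow> perp a (u + v)"
  unfolding perp_def by simp
lemma perp_scale: "perp a u \<Longrightarrow> perp a (c *\<^sub>R u)"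
  unfolding perp_def by simp
lemma perp_0: "perp a 0" unfolding perp_def by simp

lemma qop_cases: "m < 4 \<Longrightarrow> m = 0 \<or> m = 1 \<or> m = 2 \<or> m = (3::nat)" by auto

lemma perp_quad: assumes "perp a b" "m < 4" "m' < 4" shows "H1 (qop m a) (qop m' b) = 0"
proof -
  have a: "H1 a b = 0" "H1 (J a) b = 0" "H1 a (J b) = 0" "H1 (J a) (J b) = 0"
    using assms(1) perp_alt[of a b] unfolding perp_def by simp_all
  show ?thesis using qop_cases[OF assms(2)] qop_cases[OF assms(3)] a
    by (auto simp: qop_def)
qed

lemma self_quad: assumes "m < 4" "m' < 4" "m \<noteq> m'" shows "p (qop m a) (qop m' a) = 0"
proof -
  show ?thesis using qop_cases[OF assms(1)] qop_cases[OF assms(2)] assms(3) H1_real[of a] H1_Ja_a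
    by (auto simp: qop_def p_def)
qed

lemma diag_quad: assumes "m < 4" "a \<noteq> 0" shows "p (qop m a) (qop m a) > 0"
proof -
  show ?thesis using qop_cases[OF assms(1)] H1_pos[OF assms(2)] H1_real[of a]
    by (auto simp: qop_def p_def)
qed

end

lemma quad_zero:
  fixes b q :: real
  assumes "\<And>t. 2*t*b + t^2*q \<ge> 0" shows "b = 0"
proof (rule ccontr)
  assume "b \<noteq> 0"
  define c where "c = \<bar>q\<bar> + 1"
  have c: "c > 0" unfolding c_def by simp
  have "0 \<le> 2*(-b/c)*b + (-b/c)^2*q" by (rule assms)
  then have "0 \<le> c^2 * (2*(-b/c)*b + (-b/c)^2*q)" using c by simp
  also have "c^2 * (2*(-b/c)*b + (-b/c)^2*q) = -2*b^2*c + b^2*q"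
    using c by (simp add: field_simps power2_eq_square)
  also have "\<dots> \<le> -2*b^2*c + b^2*(c - 1)"
    unfolding c_def by (intro add_left_mono mult_left_mono) auto
  also have "\<dots> < 0" using c \<open>b \<noteq> 0\<close> by (simp add: algebra_simps) (smt (verit) mult_pos_pos zero_less_power2)
  finally show False by simp
qed

context hq2 begin

lemma p_linear: "linear (\<lambda>a. p a s)"
  by (rule linearI) (simp_all add: p_def)

lemma p_sum: "p (\<Sum>v\<in>S. u v *\<^sub>R v) s = (\<Sum>v\<in>S. u v * p v s)"
  using linear_sum[OF p_linear, of "\<lambda>v. u v *\<^sub>R v" S]
  by (simp add: linear_scale[OF p_linear] p_def)

lemma orth_sum_pick:
  assumes "finite S" "s \<in> S" "\<And>t. t \<in> S \<Longrightarrow> t \<noteq> s \<Longrightarrow> p t s = 0"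
  shows "p (\<Sum>v\<in>S. u v *\<^sub>R v) s = u s * p s s"
proof -
  have "p (\<Sum>v\<in>S. u v *\<^sub>R v) s = (\<Sum>v\<in>S. u v * p v s)" by (rule p_sum)
  also have "\<dots> = u s * p s s"
    using assms by (subst sum.remove[of S s]) (auto intro!: sum.neutral)
  finally show ?thesis .
qed

lemma orth_indep:
  assumes fin: "finite S" and ps: "\<And>s. s \<in> S \<Longrightarrow> p s s > 0"
    and po: "\<And>s t. s \<in> S \<Longrightarrow> t \<in> S \<Longrightarrow> s \<noteq> t \<Longrightarrow> p s t = 0"
  shows "\<not> dependent S"
proof
  assume "dependent S"
  then obtain u s where s: "s \<in> S" "u s \<noteq> 0" and z: "(\<Sum>v\<in>S. u v *\<^sub>R v) = 0"
    using dependent_finite[OF fin] by blast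
  have "p (\<Sum>v\<in>S. u v *\<^sub>R v) s = u s * p s s"
    by (rule orth_sum_pick[OF fin s(1)]) (use po s(1) in blast)
  then have "u s * p s s = 0" using z by (simp add: p_def)
  then show False using s ps[OF s(1)] by simp
qed

lemma orth_complement:
  assumes fin: "finite S" and ps: "\<And>s. s \<in> S \<Longrightarrow> p s s > 0"
    and po: "\<And>s t. s \<in> S \<Longrightarrow> t \<in> S \<Longrightarrow> s \<noteq> t \<Longrightarrow> p s t = 0"
    and card: "card S < DIM('v)"
  shows "\<exists>w. w \<noteq> 0 \<and> (\<forall>s\<in>S. p s w = 0)"
proof -
  have "\<not> UNIV \<subseteq> span S"
  proof
    assume "UNIV \<subseteq> span S"
    then have "dim (UNIV::'v set) \<le> dim (span S)" by (rule dim_subset)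
    also have "\<dots> = dim S" by simp
    also have "\<dots> \<le> card S" using fin by (simp add: dim_le_card')
    finally show False using card by simp
  qed
  then obtain v where v: "v \<notin> span S" by blast
  define w where "w = v - (\<Sum>s\<in>S. (p s v / p s s) *\<^sub>R s)"
  have "w \<noteq> 0"
  proof
    assume "w = 0"
    then have "v = (\<Sum>s\<in>S. (p s v / p s s) *\<^sub>R s)" unfolding w_def by simp
    also have "\<dots> \<in> span S" by (intro span_sum span_scale span_base)
    finally show False using v by simp
  qed
  moreover have "p s0 w = 0" if s0: "s0 \<in> S" for s0
  proof -
    have "p w s0 = p v s0 - p (\<Sum>s\<in>S. (p s v / p s s) *\<^sub>R s) s0"
      unfolding w_def by (simp add: p_def)
    also have "p (\<Sum>s\<in>S. (p s v / p s s) *\<^sub>R s) s0 = (p s0 v / p s0 s0) * p s0 s0"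
      by (rule orth_sum_pick[OF fin s0]) (use po s0 in blast)
    also have "\<dots> = p v s0" using ps[OF s0] p_sym[of s0 v] by simp
    finally show ?thesis using p_sym[of s0 w] by simp
  qed
  ultimately show ?thesis by blast
qed

end

context hq2 begin

lemma cont_H1: "continuous_on C (\<lambda>y. Re (H1 y y))"
proof -
  have "bounded_linear J" using linJ linear_conv_bounded_linear by blast
  then have cJ: "continuous_on C J" by (rule linear_continuous_on)
  have "continuous_on C (\<lambda>y. \<Omega>1 y (J y))"
    by (rule bilinear_continuous_on_compose[OF continuous_on_id cJ bil[OF F1]])
  then have "continuous_on C (\<lambda>y. H1 y y)" unfolding H1_def .
  then show ?thesis by (rule bounded_linear.continuous_on[OF bounded_linear_Re])
qed
lemma cont_H2: "continuous_on C (\<lambda>y. Re (H2 y y))"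
proof -
  have "bounded_linear J" using linJ linear_conv_bounded_linear by blast
  then have cJ: "continuous_on C J" by (rule linear_continuous_on)
  have "continuous_on C (\<lambda>y. \<Omega>2 y (J y))"
    by (rule bilinear_continuous_on_compose[OF continuous_on_id cJ bil[OF F2]])
  then have "continuous_on C (\<lambda>y. H2 y y)" unfolding H2_def .
  then show ?thesis by (rule bounded_linear.continuous_on[OF bounded_linear_Re])
qed

lemma H1_scale2: "H1 (c *\<^sub>R w) (c *\<^sub>R w) = (c*c) *\<^sub>R H1 w w" by simp
lemma H2_scale2: "H2 (c *\<^sub>R w) (c *\<^sub>R w) = (c*c) *\<^sub>R H2 w w" by simp

lemma min_eigen:
  fixes W :: "'v set"
  assumes clW: "closed W" and add: "\<And>u v. u \<in> W \<Longrightarrow> v \<in> W \<Longrightarrow> u + v \<in> W"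
    and sc: "\<And>c u. u \<in> W \<Longrightarrow> c *\<^sub>R u \<in> W" and IW: "\<And>u. u \<in> W \<Longrightarrow> I u \<in> W"
    and ne: "w0 \<in> W" "w0 \<noteq> 0"
  shows "\<exists>e\<in>W. e \<noteq> 0 \<and> (\<exists>l::real. \<forall>w\<in>W. H2 e w = of_real l * H1 e w)"
proof -
  define C where "C = W \<inter> sphere 0 1"
  define f where "f y = Re (H2 y y) / Re (H1 y y)" for y
  have cC: "compact C" unfolding C_def using clW by (simp add: closed_Int_compact)
  have "(1 / norm w0) *\<^sub>R w0 \<in> C" using ne sc unfolding C_def by simp
  then have neC: "C \<noteq> {}" by blast
  have C0: "y \<noteq> 0" if "y \<in> C" for y using that unfolding C_def by auto
  have cf: "continuous_on C f" unfolding f_def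
    by (intro continuous_on_divide cont_H1 cont_H2) (use C0 H1_pos in force)
  obtain e where eC: "e \<in> C" and emin: "\<And>y. y \<in> C \<Longrightarrow> f e \<le> f y"
    using continuous_attains_inf[OF cC neC cf] by blast
  define l where "l = f e"
  have eW: "e \<in> W" and e0: "e \<noteq> 0" using eC C0 unfolding C_def by auto
  define Q where "Q w = Re (H2 w w) - l * Re (H1 w w)" for w
  define \<beta> where "\<beta> a b = Re (H2 a b) - l * Re (H1 a b)" for a b
  have Qnn: "Q w \<ge> 0" if wW: "w \<in> W" for w
  proof (cases "w = 0")
    case True then show ?thesis unfolding Q_def by simp
  next
    case False
    define y where "y = (1 / norm w) *\<^sub>R w"
    have yC: "y \<in> C" unfolding y_def C_def using wW sc False by simp
    have "f y = f w" unfolding f_def y_def H1_scale2 H2_scale2 using False by simp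
    then have "l \<le> Re (H2 w w) / Re (H1 w w)" using emin[OF yC] unfolding l_def f_def by simp
    then show ?thesis unfolding Q_def using H1_pos[OF False] by (simp add: field_simps)
  qed
  have Qe: "Q e = 0" unfolding Q_def l_def f_def using H1_pos[OF e0] by simp
  have bsym: "\<beta> b a = \<beta> a b" for a b unfolding \<beta>_def using herm1[of a b] herm2[of a b] by simp
  have Qexp: "Q (e + t *\<^sub>R w) = Q e + 2 * t * \<beta> e w + t^2 * Q w" for t w
  proof -
    have h: "Re (H2 w e) = Re (H2 e w)" "Re (H1 w e) = Re (H1 e w)"
      using herm1[of e w] herm2[of e w] by simp_all
    show ?thesis unfolding Q_def \<beta>_def using h by (simp add: algebra_simps power2_eq_square)
  qed
  have b0: "\<beta> e w = 0" if wW: "w \<in> W" for w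
  proof (rule quad_zero)
    fix t :: real
    have "e + t *\<^sub>R w \<in> W" using add sc eW wW by blast
    then have "0 \<le> Q (e + t *\<^sub>R w)" by (rule Qnn)
    then show "0 \<le> 2 * t * \<beta> e w + t^2 * Q w" unfolding Qexp Qe by simp
  qed
  have "H2 e w = of_real l * H1 e w" if wW: "w \<in> W" for w
  proof -
    have "\<beta> e w = 0" "\<beta> e (I w) = 0" using b0 wW IW by auto
    then show ?thesis unfolding \<beta>_def by (simp add: complex_eq_iff)
  qed
  then show ?thesis using eW e0 by blast
qed

end

context hq2 begin

definition Wk :: "(nat \<Rightarrow> 'v) \<Rightarrow> nat \<Rightarrow> 'v set" where
  "Wk x k = {w. \<forall>j<k. perp (x j) w}"
definition fam_ok :: "nat \<Rightarrow> (nat \<Rightarrow> 'v) \<Rightarrow> bool" where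
  "fam_ok k x \<longleftrightarrow> (\<forall>i<k. x i \<noteq> 0) \<and> (\<forall>i<k. \<forall>j<k. i \<noteq> j \<longrightarrow> perp (x i) (x j))"
definition fam :: "nat \<Rightarrow> (nat \<Rightarrow> 'v) \<Rightarrow> 'v set" where
  "fam k x = (\<lambda>(i,m). qop m (x i)) ` ({..<k} \<times> {..<4})"

lemma H1_lin: "linear (\<lambda>w. H1 a w)" by (rule linearI) simp_all

lemma closed_H1: "closed {w. H1 a w = 0}"
proof -
  have "bounded_linear (\<lambda>w. H1 a w)" using H1_lin linear_conv_bounded_linear by blast
  then have "continuous_on UNIV (\<lambda>w. H1 a w)" by (rule linear_continuous_on)
  then show ?thesis by (intro closed_Collect_eq) (simp_all add: continuous_on_const)
qed

lemma closed_Wk: "closed (Wk x k)"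
proof -
  have "Wk x k = (\<Inter>j\<in>{..<k}. {w. H1 (x j) w = 0} \<inter> {w. H1 (J (x j)) w = 0})"
    unfolding Wk_def perp_def by auto
  then show ?thesis by (simp add: closed_INT closed_Int closed_H1)
qed

lemma Wk_props: "u \<in> Wk x k \<Longrightarrow> v \<in> Wk x k \<Longrightarrow> u + v \<in> Wk x k"
  "u \<in> Wk x k \<Longrightarrow> c *\<^sub>R u \<in> Wk x k" "u \<in> Wk x k \<Longrightarrow> I u \<in> Wk x k"
  "u \<in> Wk x k \<Longrightarrow> J u \<in> Wk x k"
  unfolding Wk_def by (auto intro: perp_add perp_scale perp_I perp_J)

lemma fam_orth:
  assumes ok: "fam_ok k x" and ij: "i < k" "j < k" and m: "m < 4" "m' < 4" and ne: "(i,m) \<noteq> (j,m')"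
  shows "p (qop m (x i)) (qop m' (x j)) = 0"
proof (cases "i = j")
  case True
  then show ?thesis using self_quad[OF m] ne by simp
next
  case False
  then have "perp (x i) (x j)" using ok ij unfolding fam_ok_def by blast
  then show ?thesis using perp_quad[OF _ m] by (simp add: p_def)
qed

lemma fam_facts:
  assumes ok: "fam_ok k x"
  shows "finite (fam k x)" "card (fam k x) \<le> 4 * k"
    "\<And>s. s \<in> fam k x \<Longrightarrow> p s s > 0"
    "\<And>s t. s \<in> fam k x \<Longrightarrow> t \<in> fam k x \<Longrightarrow> s \<noteq> t \<Longrightarrow> p s t = 0"
proof -
  show "finite (fam k x)" unfolding fam_def by simp
  have "card (fam k x) \<le> card ({..<k} \<times> {..<4::nat})" unfolding fam_def by (rule card_image_le) simp
  then show "card (fam k x) \<le> 4 * k" by (simp add: card_cartesian_product)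
  show "p s s > 0" if "s \<in> fam k x" for s
    using that ok diag_quad unfolding fam_def fam_ok_def by auto
  show "p s t = 0" if "s \<in> fam k x" "t \<in> fam k x" "s \<noteq> t" for s t
    using that fam_orth[OF ok] unfolding fam_def by auto
qed

lemma perp_from_p:
  assumes "\<And>m. m < 4 \<Longrightarrow> p (qop m a) w = 0" shows "perp a w"
proof -
  have "p a w = 0" "p (I a) w = 0" "p (J a) w = 0" "p (I (J a)) w = 0"
    using assms[of 0] assms[of 1] assms[of 2] assms[of 3] by (simp_all add: qop_def)
  then show ?thesis unfolding perp_def p_def by (simp add: complex_eq_iff)
qed

lemma Wk_nonzero:
  assumes ok: "fam_ok k x" and dim: "4 * k < DIM('v)"
  shows "\<exists>w. w \<in> Wk x k \<and> w \<noteq> 0"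
proof -
  note ff = fam_facts[OF ok]
  obtain w where w: "w \<noteq> 0" "\<And>s. s \<in> fam k x \<Longrightarrow> p s w = 0"
    using orth_complement[OF ff(1) ff(3) ff(4)] ff(2) dim by fastforce
  have "perp (x j) w" if "j < k" for j
    by (rule perp_from_p) (use w(2) that in \<open>auto simp: fam_def\<close>)
  then show ?thesis using w(1) unfolding Wk_def by blast
qed

definition good :: "nat \<Rightarrow> (nat \<Rightarrow> 'v) \<Rightarrow> bool" where
  "good k x \<longleftrightarrow> fam_ok k x \<and> (\<forall>i<k. \<exists>l::real. \<forall>w\<in>Wk x i. H2 (x i) w = of_real l * H1 (x i) w)"

lemma construct: "4 * k \<le> DIM('v) \<Longrightarrow> \<exists>x. good k x"
proof (induction k)
  case 0
  show ?case unfolding good_def fam_ok_def by simp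
next
  case (Suc k)
  then obtain x where g: "good k x" by auto
  then have ok: "fam_ok k x" unfolding good_def by blast
  obtain w0 where w0: "w0 \<in> Wk x k" "w0 \<noteq> 0" using Wk_nonzero[OF ok] Suc.prems by auto
  obtain e l where e: "e \<in> Wk x k" "e \<noteq> 0" and el: "\<And>w. w \<in> Wk x k \<Longrightarrow> H2 e w = of_real l * H1 e w"
    using min_eigen[OF closed_Wk Wk_props(1,2,3) w0] by blast
  define y where "y = x(k := e)"
  have Wy: "Wk y i = Wk x i" if "i \<le> k" for i using that unfolding Wk_def y_def by auto
  have pe: "perp (x i) e" if "i < k" for i using e(1) that unfolding Wk_def by blast
  have "fam_ok (Suc k) y"
    using ok pe perp_sym e(2) unfolding fam_ok_def y_def
    by (auto simp: less_Suc_eq)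
  moreover have "\<exists>l::real. \<forall>w\<in>Wk y i. H2 (y i) w = of_real l * H1 (y i) w" if "i < Suc k" for i
  proof (cases "i = k")
    case True then show ?thesis using el Wy[of k] unfolding y_def by auto
  next
    case False
    then have "i < k" using that by simp
    then show ?thesis using g Wy[of i] unfolding good_def y_def by auto
  qed
  ultimately show ?case unfolding good_def by blast
qed

lemma good_lt:
  assumes g: "good k x" and ij: "i < j" "j < k"
  shows "H1 (x i) (x j) = 0" "H1 (x i) (J (x j)) = 0" "H2 (x i) (x j) = 0" "H2 (x i) (J (x j)) = 0"
proof -
  have ok: "fam_ok k x" using g unfolding good_def by blast
  have pp: "perp (x i) (x j)" using ok ij unfolding fam_ok_def by auto
  then show h1: "H1 (x i) (x j) = 0" "H1 (x i) (J (x j)) = 0" using perp_alt by blast+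
  have ik: "i < k" using ij by simp
  obtain l where l: "\<And>w. w \<in> Wk x i \<Longrightarrow> H2 (x i) w = of_real l * H1 (x i) w"
    using g ik unfolding good_def by blast
  have xj: "x j \<in> Wk x i" using ok ij unfolding Wk_def fam_ok_def by auto
  show "H2 (x i) (x j) = 0" using l[OF xj] h1 by simp
  show "H2 (x i) (J (x j)) = 0" using l[OF Wk_props(4)[OF xj]] h1 by simp
qed

lemma good_ne:
  assumes g: "good k x" and ij: "i < k" "j < k" "i \<noteq> j"
  shows "H1 (x i) (x j) = 0 \<and> H1 (x i) (J (x j)) = 0 \<and> H2 (x i) (x j) = 0 \<and> H2 (x i) (J (x j)) = 0"
proof (cases "i < j")
  case True then show ?thesis using good_lt[OF g True ij(2)] by simp
next
  case False
  then have ji: "j < i" using ij by simp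
  note z = good_lt[OF g ji ij(1)]
  have a: "H1 (x i) (x j) = 0" "H2 (x i) (x j) = 0" using z herm1[of "x j" "x i"] herm2[of "x j" "x i"] by simp_all
  have "\<Omega>1 (x j) (x i) = 0" "\<Omega>2 (x j) (x i) = 0" using z(2,4) H1_Jr H2_Jr by simp_all
  then have "\<Omega>1 (x i) (x j) = 0" "\<Omega>2 (x i) (x j) = 0"
    using anti[OF F1, of "x i" "x j"] anti[OF F2, of "x i" "x j"] by simp_all
  then show ?thesis using a H1_Jr H2_Jr by simp
qed

lemma good_conds:
  assumes g: "good k x" and ij: "i < k" "j < k" "i \<noteq> j"
  shows "\<Omega>1 (x i) (x j) = 0 \<and> \<Omega>2 (x i) (x j) = 0 \<and> \<Omega>1 (x i) (J (x j)) = 0 \<and> \<Omega>2 (x i) (J (x j)) = 0"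
  using good_ne[OF assms] H1_Jr[of "x i" "x j"] H2_Jr[of "x i" "x j"] unfolding H1_def H2_def
  by simp

end

lemma module_cscale: "module (cscale :: complex \<Rightarrow> ('v::real_vector \<times> 'v) \<Rightarrow> _)"
  by standard (auto simp: cscale_def prod_eq_iff algebra_simps)

lemma hq_of_hyper:
  assumes "hypercomplex I J K" shows "hq I J"
proof -
  have lI: "linear I" and lJ: "linear J" and lK: "linear K"
    and II: "\<And>v. I (I v) = - v" and JJ: "\<And>v. J (J v) = - v" and KK: "\<And>v. K (K v) = - v"
    and KJI: "\<And>v. K (J (I v)) = - v"
    using assms unfolding hypercomplex_def by auto
  have JIK: "J (I v) = K v" for v
  proof -
    have "K (K (J (I v))) = K (- v)" using KJI by simp
    then show ?thesis using KK linear_neg[OF lK] by simp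
  qed
  have A: "I (J (I v)) = J v" for v
  proof -
    have "J (I (J (I v))) = - v" using KK[of v] JIK by simp
    then have "J (J (I (J (I v)))) = J (- v)" by simp
    then show ?thesis using JJ linear_neg[OF lJ] by simp
  qed
  have "J (I w) = - I (J w)" for w
  proof -
    have "I (J (I (- I w))) = J (- I w)" by (rule A)
    then show ?thesis using II linear_neg[OF lI] linear_neg[OF lJ] by simp
  qed
  then show ?thesis unfolding hq_def using lI lJ II JJ by blast
qed

context hq begin

lemma F20_of_form20: assumes "form20 I \<alpha>" shows "F20 I \<alpha>"
proof -
  have tf: "bilinear \<alpha>" "\<forall>x y. \<alpha> x y = - \<alpha> y x"
    using assms unfolding form20_def two_form_def by blast+
  have "\<alpha> (I x) y = \<i> * \<alpha> x y" for x y
  proof -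
    have T: "(x, I x) \<in> T01 I" unfolding T01_def by (simp add: cext_def cscale_def)
    have "\<forall>u w. u \<in> T01 I \<longrightarrow> cform \<alpha> u w = 0 \<and> cform \<alpha> w u = 0"
      using assms unfolding form20_def by blast
    then have c0: "cform \<alpha> (x, I x) (y, 0) = 0" using T by blast
    have "cform \<alpha> (x, I x) (y, 0) = \<alpha> x y + \<i> * \<alpha> (I x) y"
      unfolding cform_def using tf(1) by (simp add: bilinear_rzero)
    then have "\<alpha> x y + \<i> * \<alpha> (I x) y = 0" using c0 by simp
    then show ?thesis by (simp add: complex_eq_iff)
  qed
  then show ?thesis unfolding F20_def using tf by blast
qed

definition phi :: "'v \<Rightarrow> 'v \<times> 'v" where "phi a = (a, - I a)"

lemma phi_T10: "phi a \<in> T10 I" unfolding phi_def T10_def by (simp add: cext_def cscale_def)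
lemma T10_phi: "z \<in> T10 I \<Longrightarrow> z = phi (fst z)"
  unfolding phi_def T10_def by (cases z) (auto simp: cext_def cscale_def)
lemma phi_inj: "phi a = phi b \<longleftrightarrow> a = b" unfolding phi_def by auto
lemma phi_J: "cext J (cconj (phi b)) = phi (J b)"
  unfolding phi_def by (simp add: cext_def cconj_def JI)
lemma phi_add: "phi (a + b) = phi a + phi b" unfolding phi_def by simp
lemma phi_zero: "phi 0 = 0" unfolding phi_def by (simp add: zero_prod_def)
lemma phi_scale: "phi (r *\<^sub>R a) = cscale (of_real r) (phi a)" unfolding phi_def by (simp add: cscale_def)
lemma phi_scaleI: "phi (r *\<^sub>R I a) = cscale (\<i> * of_real r) (phi a)" unfolding phi_def by (simp add: cscale_def)
lemma phi_nz: "phi a = 0 \<longleftrightarrow> a = 0" unfolding phi_def by (simp add: prod_eq_iff)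
lemma cscale_phi: "cscale c (phi a) = phi (Re c *\<^sub>R a + Im c *\<^sub>R I a)"
  unfolding phi_def by (simp add: cscale_def algebra_simps)

lemma cform_phi: assumes "F20 I \<alpha>" shows "cform \<alpha> (phi a) (phi b) = 4 * \<alpha> a b"
  unfolding phi_def cform_def using lin_simps[OF assms] Il[OF assms] Ir[OF assms]
  by (simp add: algebra_simps)

end

context hq2 begin

lemma fam_inj: assumes ok: "fam_ok k x"
  shows "inj_on (\<lambda>(i,m). qop m (x i)) ({..<k} \<times> {..<4})"
proof (rule inj_onI, clarsimp)
  fix i m j m' assume a: "i < k" "m < (4::nat)" "j < k" "m' < (4::nat)" "qop m (x i) = qop m' (x j)"
  show "i = j \<and> m = m'"
  proof (rule ccontr)
    assume "\<not> (i = j \<and> m = m')"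
    then have "(i, m) \<noteq> (j, m')" by simp
    then have "p (qop m (x i)) (qop m' (x j)) = 0" using fam_orth[OF ok a(1) a(3) a(2) a(4)] by blast
    moreover have "p (qop m (x i)) (qop m (x i)) > 0" using diag_quad a ok unfolding fam_ok_def by auto
    ultimately show False using a(5) by simp
  qed
qed

lemma fam_card: assumes ok: "fam_ok k x" shows "card (fam k x) = 4 * k"
  unfolding fam_def using card_image[OF fam_inj[OF ok]] by (simp add: card_cartesian_product)

lemma fam_span: assumes ok: "fam_ok k x" and d: "DIM('v) = 4 * k" shows "span (fam k x) = UNIV"
proof -
  note ff = fam_facts[OF ok]
  have ind: "independent (fam k x)" using orth_indep[OF ff(1) ff(3) ff(4)] .
  have "card (fam k x) = dim (UNIV :: 'v set)" using fam_card[OF ok] d by simp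
  then have "UNIV \<subseteq> span (fam k x)" using card_eq_dim[of "fam k x" UNIV] ff(1) ind by simp
  then show ?thesis by auto
qed

lemma sum_single: "finite A \<Longrightarrow> a0 \<in> A \<Longrightarrow> (\<And>a. a \<in> A \<Longrightarrow> a \<noteq> a0 \<Longrightarrow> h a = 0) \<Longrightarrow> sum h A = h a0"
  by (subst sum.remove[of A a0]) (auto intro!: sum.neutral)

lemma p_sum2: "p (\<Sum>a\<in>A. (r a *\<^sub>R f a + q a *\<^sub>R g a)) s = (\<Sum>a\<in>A. r a * p (f a) s + q a * p (g a) s)"
  using linear_sum[OF p_linear, of "\<lambda>a. r a *\<^sub>R f a + q a *\<^sub>R g a" A]
  by (simp add: p_def)

end

context hq2 begin

lemma B_eq:
  "(\<lambda>i. phi (x i)) ` {..<k} \<union> (\<lambda>i. cext J (cconj (phi (x i)))) ` {..<k}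
     = (\<lambda>(i,m). phi (qop m (x i))) ` ({..<k} \<times> {0,2})"
  by (auto simp: qop_def phi_J image_iff)

lemma qop_I: "m = 0 \<or> m = 2 \<Longrightarrow> I (qop m a) = qop (Suc m) a"
  by (auto simp: qop_def)

lemma basis_props:
  assumes ok: "fam_ok k x" and d: "DIM('v) = 4 * k"
  defines "B \<equiv> (\<lambda>(i,m). phi (qop m (x i))) ` ({..<k} \<times> {0::nat,2})"
  shows "card B = 2 * k" "\<not> module.dependent cscale B" "module.span cscale B = T10 I"
proof -
  interpret M: module cscale by (rule module_cscale)
  define A where "A = {..<k} \<times> {0::nat,2}"
  define g where "g = (\<lambda>(i,m). phi (qop m (x i)))"
  have Asub: "A \<subseteq> {..<k} \<times> {..<4}" unfolding A_def by auto
  have injg: "inj_on g A"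
  proof -
    have "inj_on (\<lambda>(i,m). qop m (x i)) A" using inj_on_subset[OF fam_inj[OF ok] Asub] .
    then have "inj_on (phi \<circ> (\<lambda>(i,m). qop m (x i))) A"
      by (rule comp_inj_on) (auto simp: inj_on_def phi_inj)
    moreover have "phi \<circ> (\<lambda>(i,m). qop m (x i)) = g" unfolding g_def by (auto simp: fun_eq_iff)
    ultimately show ?thesis by simp
  qed
  have finA: "finite A" unfolding A_def by simp
  have BA: "B = g ` A" unfolding B_def A_def g_def ..
  show "card B = 2 * k" unfolding BA using card_image[OF injg] by (simp add: A_def card_cartesian_product)
  have finB: "finite B" unfolding BA using finA by simp
  have phiB: "phi (qop m (x i)) \<in> B" if "i < k" "m = 0 \<or> m = 2" for i m
    unfolding B_def using that by force
  have sub: "M.subspace (T10 I)"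
  proof (rule M.subspaceI)
    show "0 \<in> T10 I" using phi_T10[of 0] phi_zero by simp
    show "u + v \<in> T10 I" if "u \<in> T10 I" "v \<in> T10 I" for u v
      using T10_phi[OF that(1)] T10_phi[OF that(2)] phi_add[of "fst u" "fst v"] phi_T10 by metis
    show "cscale c u \<in> T10 I" if "u \<in> T10 I" for c u
      using T10_phi[OF that] cscale_phi[of c "fst u"] phi_T10 by metis
  qed
  have "B \<subseteq> T10 I" unfolding B_def using phi_T10 by auto
  then have s1: "M.span B \<subseteq> T10 I" using M.span_minimal sub by blast
  define P where "P = {a. phi a \<in> M.span B}"
  have subP: "subspace P"
  proof (rule subspaceI)
    show "0 \<in> P" unfolding P_def using phi_zero M.span_zero by simp
    show "u + v \<in> P" if "u \<in> P" "v \<in> P" for u v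
      using that unfolding P_def by (simp add: phi_add M.span_add)
    show "c *\<^sub>R u \<in> P" if "u \<in> P" for c u
      using that unfolding P_def by (simp add: phi_scale M.span_scale)
  qed
  have famP: "fam k x \<subseteq> P"
  proof
    fix s assume "s \<in> fam k x"
    then obtain i m where im: "i < k" "m < 4" "s = qop m (x i)" unfolding fam_def by auto
    show "s \<in> P"
    proof (cases "m = 0 \<or> m = 2")
      case True
      have "phi s \<in> M.span B" using M.span_base[OF phiB[OF im(1) True]] im(3) by simp
      then show ?thesis unfolding P_def by simp
    next
      case False
      then have m': "m - 1 = 0 \<or> m - 1 = 2" and sm: "Suc (m - 1) = m" using im(2) by auto
      have "s = 1 *\<^sub>R I (qop (m - 1) (x i))" using qop_I[OF m'] sm im(3) by simp
      then have "phi s = cscale (\<i> * of_real 1) (phi (qop (m - 1) (x i)))" by (simp only: phi_scaleI)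
      moreover have "phi (qop (m - 1) (x i)) \<in> M.span B" using M.span_base[OF phiB[OF im(1) m']] .
      ultimately show ?thesis using M.span_scale unfolding P_def by simp
    qed
  qed
  have "span (fam k x) \<subseteq> P" using span_minimal[OF famP subP] .
  then have UP: "P = UNIV" using fam_span[OF ok d] by auto
  have "T10 I \<subseteq> M.span B"
  proof
    fix z assume "z \<in> T10 I"
    then have "z = phi (fst z)" by (rule T10_phi)
    moreover have "fst z \<in> P" using UP by simp
    ultimately show "z \<in> M.span B" unfolding P_def by simp
  qed
  then show "M.span B = T10 I" using s1 by blast
  show "\<not> M.dependent B"
  proof
    assume "M.dependent B"
    then obtain u v0 where v0: "v0 \<in> B" "u v0 \<noteq> 0" and z: "(\<Sum>v\<in>B. cscale (u v) v) = 0"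
      using M.dependent_finite[OF finB] by blast
    define c where "c a = u (g a)" for a
    define f where "f a = qop (snd a) (x (fst a))" for a
    obtain a0 where a0: "a0 \<in> A" "v0 = g a0" using v0 BA by auto
    have c0: "c a0 \<noteq> 0" using v0 a0 unfolding c_def by simp
    have ga: "g a = phi (f a)" for a unfolding g_def f_def by (simp add: case_prod_beta)
    have "(\<Sum>a\<in>A. cscale (c a) (g a)) = 0"
      using z unfolding BA c_def by (simp add: sum.reindex[OF injg])
    then have "fst (\<Sum>a\<in>A. cscale (c a) (g a)) = 0" by simp
    then have z2: "(\<Sum>a\<in>A. Re (c a) *\<^sub>R f a + Im (c a) *\<^sub>R I (f a)) = 0"
      unfolding fst_sum ga cscale_phi by (simp add: phi_def)
    have fA: "fst a < k" "snd a = 0 \<or> snd a = 2" if "a \<in> A" for a using that unfolding A_def by auto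
    have If: "I (f a) = qop (Suc (snd a)) (x (fst a))" if "a \<in> A" for a
      unfolding f_def using qop_I fA[OF that] by blast
    have orth: "p (qop m (x i)) (qop m' (x j)) = 0"
      if "i < k" "j < k" "m < 4" "m' < 4" "(i, m) \<noteq> (j, m')" for i j m m'
      using fam_orth[OF ok that] .
    have pos: "p (qop m (x i)) (qop m (x i)) > 0" if "i < k" "m < 4" for i m
      using diag_quad that ok unfolding fam_ok_def by auto
    have ab: "a = a0" if "a \<in> A" "fst a = fst a0" "snd a = snd a0" for a
      using that by (simp add: prod_eq_iff)
    have "p (\<Sum>a\<in>A. Re (c a) *\<^sub>R f a + Im (c a) *\<^sub>R I (f a)) (f a0)
        = (\<Sum>a\<in>A. Re (c a) * p (f a) (f a0) + Im (c a) * p (I (f a)) (f a0))" by (rule p_sum2)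
    also have "\<dots> = Re (c a0) * p (f a0) (f a0) + Im (c a0) * p (I (f a0)) (f a0)"
    proof (rule sum_single[OF finA a0(1)])
      fix a assume a: "a \<in> A" "a \<noteq> a0"
      have "p (f a) (f a0) = 0" unfolding f_def
        using orth[of "fst a" "fst a0" "snd a" "snd a0"] fA[OF a(1)] fA[OF a0(1)] ab[OF a(1)] a(2) by (auto simp: prod_eq_iff)
      moreover have "p (I (f a)) (f a0) = 0" unfolding If[OF a(1)] unfolding f_def
        using orth[of "fst a" "fst a0" "Suc (snd a)" "snd a0"] fA[OF a(1)] fA[OF a0(1)] by (auto simp: prod_eq_iff)
      ultimately show "Re (c a) * p (f a) (f a0) + Im (c a) * p (I (f a)) (f a0) = 0" by simp
    qed
    also have "p (I (f a0)) (f a0) = 0" unfolding If[OF a0(1)] unfolding f_def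
      using orth[of "fst a0" "fst a0" "Suc (snd a0)" "snd a0"] fA[OF a0(1)] by (auto simp: prod_eq_iff)
    finally have "Re (c a0) * p (f a0) (f a0) = 0" using z2 by (simp add: p_def)
    moreover have "p (f a0) (f a0) > 0" unfolding f_def using pos fA[OF a0(1)] by (auto simp: prod_eq_iff)
    ultimately have re: "Re (c a0) = 0" by simp
    have "p (\<Sum>a\<in>A. Re (c a) *\<^sub>R f a + Im (c a) *\<^sub>R I (f a)) (I (f a0))
        = (\<Sum>a\<in>A. Re (c a) * p (f a) (I (f a0)) + Im (c a) * p (I (f a)) (I (f a0)))" by (rule p_sum2)
    also have "\<dots> = Re (c a0) * p (f a0) (I (f a0)) + Im (c a0) * p (I (f a0)) (I (f a0))"
    proof (rule sum_single[OF finA a0(1)])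
      fix a assume a: "a \<in> A" "a \<noteq> a0"
      have "p (f a) (I (f a0)) = 0" unfolding If[OF a0(1)] unfolding f_def
        using orth[of "fst a" "fst a0" "snd a" "Suc (snd a0)"] fA[OF a(1)] fA[OF a0(1)] by (auto simp: prod_eq_iff)
      moreover have "p (I (f a)) (I (f a0)) = 0" unfolding If[OF a(1)] If[OF a0(1)]
        using orth[of "fst a" "fst a0" "Suc (snd a)" "Suc (snd a0)"] fA[OF a(1)] fA[OF a0(1)] ab[OF a(1)] a(2) by (auto simp: prod_eq_iff)
      ultimately show "Re (c a) * p (f a) (I (f a0)) + Im (c a) * p (I (f a)) (I (f a0)) = 0" by simp
    qed
    finally have "Im (c a0) * p (I (f a0)) (I (f a0)) = 0" using z2 re by (simp add: p_def)
    moreover have "p (I (f a0)) (I (f a0)) > 0" unfolding If[OF a0(1)] using pos fA[OF a0(1)] by (auto simp: prod_eq_iff)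
    ultimately have "Im (c a0) = 0" by simp
    then show False using re c0 by (simp add: complex_eq_iff)
  qed
qed

end

theorem lemma3:
  fixes I J K :: "'v::euclidean_space \<Rightarrow> 'v"
    and \<Omega>1 \<Omega>2 :: "'v \<Rightarrow> 'v \<Rightarrow> complex"
    and n :: nat
  assumes "hypercomplex I J K"
    and "DIM('v) = 4 * n"
    and "form20 I \<Omega>1" and "strictly_positive I J \<Omega>1"
    and "form20 I \<Omega>2" and "q_real J \<Omega>2"
  shows "\<exists>e :: nat \<Rightarrow> 'v \<times> 'v.
           (\<forall>i<n. e i \<in> T10 I) \<and>
           (let B = e ` {..<n} \<union> (\<lambda>i. cext J (cconj (e i))) ` {..<n} in
              card B = 2 * n \<and> \<not> module.dependent cscale B \<and> module.span cscale B = T10 I) \<and>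
           (\<forall>i<n. \<forall>j<n. i \<noteq> j \<longrightarrow>
               cform \<Omega>1 (e i) (e j) = 0 \<and> cform \<Omega>2 (e i) (e j) = 0 \<and>
               cform \<Omega>1 (e i) (cext J (cconj (e j))) = 0 \<and>
               cform \<Omega>2 (e i) (cext J (cconj (e j))) = 0)"
proof -
  have hqIJ: "hq I J" using hq_of_hyper[OF assms(1)] .
  interpret hq I J by (rule hqIJ)
  have F1: "F20 I \<Omega>1" by (rule F20_of_form20[OF assms(3)])
  have F2: "F20 I \<Omega>2" by (rule F20_of_form20[OF assms(5)])
  have sp: "Im (\<Omega>1 x (J x)) = 0 \<and> Re (\<Omega>1 x (J x)) > 0" if "x \<noteq> 0" for x
  proof -
    have "phi x \<in> T10 I" "phi x \<noteq> 0" using phi_T10 phi_nz that by auto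
    then have "Im (cform \<Omega>1 (phi x) (cext J (cconj (phi x)))) = 0 \<and>
               Re (cform \<Omega>1 (phi x) (cext J (cconj (phi x)))) > 0"
      using assms(4) unfolding strictly_positive_def by blast
    then show ?thesis unfolding phi_J cform_phi[OF F1] by simp
  qed
  have R1: "Im (\<Omega>1 x (J x)) = 0" for x
  proof (cases "x = 0")
    case True then show ?thesis using lin_simps[OF F1] by simp
  next
    case False then show ?thesis using sp by blast
  qed
  have pos: "Re (\<Omega>1 x (J x)) > 0" if "x \<noteq> 0" for x using sp[OF that] by blast
  have Q2: "\<Omega>2 (J x) (J y) = cnj (\<Omega>2 x y)" for x y using assms(6) unfolding q_real_def by blast
  have "hq2 I J \<Omega>1 \<Omega>2" by (rule hq2.intro[OF hqIJ hq2_axioms.intro[OF F1 F2 R1 pos Q2]])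
  then interpret H: hq2 I J \<Omega>1 \<Omega>2 .
  obtain x where g: "H.good n x" using H.construct[of n] assms(2) by auto
  have ok: "H.fam_ok n x" using g unfolding H.good_def by blast
  note bp = H.basis_props[OF ok assms(2)]
  show ?thesis
  proof (rule exI[of _ "\<lambda>i. phi (x i)"], intro conjI)
    show "\<forall>i<n. phi (x i) \<in> T10 I" using phi_T10 by blast
    show "let B = (\<lambda>i. phi (x i)) ` {..<n} \<union> (\<lambda>i. cext J (cconj (phi (x i)))) ` {..<n} in
      card B = 2 * n \<and> \<not> module.dependent cscale B \<and> module.span cscale B = T10 I"
      unfolding Let_def H.B_eq using bp by blast
    show "\<forall>i<n. \<forall>j<n. i \<noteq> j \<longrightarrow>
               cform \<Omega>1 (phi (x i)) (phi (x j)) = 0 \<and> cform \<Omega>2 (phi (x i)) (phi (x j)) = 0 \<and>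
               cform \<Omega>1 (phi (x i)) (cext J (cconj (phi (x j)))) = 0 \<and>
               cform \<Omega>2 (phi (x i)) (cext J (cconj (phi (x j)))) = 0"
      using H.good_conds[OF g] unfolding phi_J cform_phi[OF F1] cform_phi[OF F2] by simp
  qed
qed

end
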